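(* Let $X$ be a real Hilbert space, $f:X\to\mathbb{R}$ a proper $\Phi_{lsc}$-convex function and $U\subset X$ open. If $f$ is twice continuously Fréchet differentiable on $U$, then $\partial_{lsc}f(x)\ne\emptyset$ for every $x\in U$.
   Context: $\Phi_{lsc}$ is the class of functions $\varphi(x)=-a\|x\|^2+\langle v,x\rangle+c$ ($a\ge0$, $v\in X^*$, $c\in\mathbb{R}$); $f$ is $\Phi_{lsc}$-convex if it is the pointwise supremum of the $\varphi\in\Phi_{lsc}$ with $\varphi\le f$; proper means at least one such $\varphi$ exists. $\partial_{lsc}f(x)$ is the set of $(a,v)\in\mathbb{R}_+\times X^*$ with $f(z)-f(x)\ge\langle v,z-x\rangle-a\|z\|^2+a\|x\|^2$ for all $z\in X$. *)

theory Defs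
  imports "HOL-Analysis.Analysis"
begin

definition Phi_lsc :: "('a::real_normed_vector \<Rightarrow> real) set" where
  "Phi_lsc = {\<phi>. \<exists>a (v::'a \<Rightarrow>\<^sub>L real) c. a \<ge> 0 \<and>
      \<phi> = (\<lambda>x. - a * (norm x)\<^sup>2 + blinfun_apply v x + c)}"

definition Phi_lsc_minorants :: "('a::real_normed_vector \<Rightarrow> real) \<Rightarrow> ('a \<Rightarrow> real) set" where
  "Phi_lsc_minorants f = {\<phi> \<in> Phi_lsc. \<forall>x. \<phi> x \<le> f x}"

definition Phi_lsc_convex :: "('a::real_normed_vector \<Rightarrow> real) \<Rightarrow> bool" where
  "Phi_lsc_convex f \<longleftrightarrow> (\<forall>x. f x = (SUP \<phi>\<in>Phi_lsc_minorants f. \<phi> x))"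

definition Phi_lsc_proper :: "('a::real_normed_vector \<Rightarrow> real) \<Rightarrow> bool" where
  "Phi_lsc_proper f \<longleftrightarrow> Phi_lsc_minorants f \<noteq> {}"

definition subdiff_lsc :: "('a::real_normed_vector \<Rightarrow> real) \<Rightarrow> 'a \<Rightarrow> (real \<times> ('a \<Rightarrow>\<^sub>L real)) set" where
  "subdiff_lsc f x = {(a, v). a \<ge> 0 \<and>
      (\<forall>z. f z - f x \<ge> blinfun_apply v (z - x) - a * (norm z)\<^sup>2 + a * (norm x)\<^sup>2)}"

definition C2_on :: "'a::real_normed_vector set \<Rightarrow> ('a \<Rightarrow> real) \<Rightarrow> bool" where
  "C2_on U f \<longleftrightarrow> (\<exists>(Df :: 'a \<Rightarrow> ('a \<Rightarrow>\<^sub>L real)) (D2f :: 'a \<Rightarrow> ('a \<Rightarrow>\<^sub>L ('a \<Rightarrow>\<^sub>L real))).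
      (\<forall>x\<in>U. (f has_derivative blinfun_apply (Df x)) (at x)) \<and>
      (\<forall>x\<in>U. (Df has_derivative blinfun_apply (D2f x)) (at x)) \<and>
      continuous_on U D2f)"

end

theory Submission
  imports Defs
begin

lemma local_bound:
  fixes f :: "'a::real_normed_vector \<Rightarrow> real"
  assumes "open U" "x \<in> U"
    and df: "\<forall>x\<in>U. (f has_derivative blinfun_apply (Df x)) (at x)"
    and d2: "(Df has_derivative blinfun_apply D2) (at x)"
  shows "\<exists>r>0. \<exists>K\<ge>0. \<forall>y. norm (y - x) < r \<longrightarrow>
           f y - f x - blinfun_apply (Df x) (y - x) \<ge> - K * (norm (y - x))\<^sup>2"
proof -
  have "\<forall>e>0. \<exists>d>0. \<forall>y. norm(y - x) < d \<longrightarrow> norm (Df y - Df x - blinfun_apply D2 (y - x)) \<le> e * norm (y - x)"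
    using d2 unfolding has_derivative_at_alt by blast
  from this[rule_format, of 1] obtain d where d: "d>0" "\<forall>y. norm(y - x) < d \<longrightarrow> norm (Df y - Df x - blinfun_apply D2 (y - x)) \<le> 1 * norm (y - x)"
    by auto
  obtain e where e: "e>0" "ball x e \<subseteq> U" using assms(1,2) open_contains_ball by blast
  define r where "r = min d e"
  define K where "K = norm D2 + 1"
  have lip: "norm (Df y - Df x) \<le> K * norm (y - x)" if "norm (y - x) < d" for y
  proof -
    have "norm (Df y - Df x) \<le> norm (Df y - Df x - blinfun_apply D2 (y - x)) + norm (blinfun_apply D2 (y - x))"
      using norm_triangle_ineq[of "Df y - Df x - blinfun_apply D2 (y - x)" "blinfun_apply D2 (y - x)"] by simp
    also have "\<dots> \<le> norm (y - x) + norm D2 * norm (y - x)"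
      using d(2) that norm_blinfun[of D2 "y-x"] by auto
    finally show ?thesis by (simp add: K_def algebra_simps)
  qed
  have "\<forall>y. norm (y - x) < r \<longrightarrow> f y - f x - blinfun_apply (Df x) (y - x) \<ge> - K * (norm (y - x))\<^sup>2"
  proof (intro allI impI)
    fix y assume y: "norm (y - x) < r"
    define S where "S = cball x (norm (y - x))"
    have SU: "S \<subseteq> U" using e y by (auto simp: S_def r_def dist_norm norm_minus_commute)
    have "norm (f y - f x - blinfun_apply (Df x) (y - x)) \<le> norm (y - x) * (K * norm (y - x))"
    proof (rule differentiable_bound_linearization[where S=S and f' = "\<lambda>z. blinfun_apply (Df z)"])
      fix t :: real assume "t \<in> {0..1}"
      then show "x + t *\<^sub>R (y - x) \<in> S"
      proof -
        have "norm (t *\<^sub>R (y - x)) \<le> norm (y - x)"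
          using \<open>t \<in> {0..1}\<close> by (simp add: mult_left_le_one_le)
        then show ?thesis by (simp add: S_def dist_norm)
      qed
    next
      fix z assume "z \<in> S"
      then show "(f has_derivative blinfun_apply (Df z)) (at z within S)"
        using SU df has_derivative_at_withinI by blast
    next
      fix z assume z: "z \<in> S"
      have "onorm (blinfun_apply (Df z) - blinfun_apply (Df x)) = norm (Df z - Df x)"
        proof -
        have "blinfun_apply (Df z) - blinfun_apply (Df x) = blinfun_apply (Df z - Df x)"
          by (rule ext) (simp add: blinfun.diff_left)
        then show ?thesis by (simp add: norm_blinfun.rep_eq)
      qed
      also have "\<dots> \<le> K * norm (z - x)"
        using z y by (intro lip) (auto simp: S_def r_def dist_norm norm_minus_commute)
      also have "\<dots> \<le> K * norm (y - x)"
        using z by (intro mult_left_mono) (auto simp: S_def K_def dist_norm norm_minus_commute)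
      finally show "onorm (blinfun_apply (Df z) - blinfun_apply (Df x)) \<le> K * norm (y - x)" .
    next
      show "x \<in> S" by (simp add: S_def)
    qed
    then show "f y - f x - blinfun_apply (Df x) (y - x) \<ge> - K * (norm (y - x))\<^sup>2"
      by (simp add: power2_eq_square abs_le_iff algebra_simps)
  qed
  moreover have "r > 0" "K \<ge> 0" using d e by (auto simp: r_def K_def)
  ultimately show ?thesis by blast
qed

lemma real_aux:
  fixes r n B C :: real
  assumes "r > 0" "n \<ge> r" "B \<ge> 0" "C \<ge> 0"
  shows "(B / r + C / r\<^sup>2) * n\<^sup>2 \<ge> B * n + C"
proof -
  have n0: "n > 0" using assms by linarith
  have "B * n = (B / r) * (r * n)" using assms by (simp add: field_simps)
  also have "\<dots> \<le> (B / r) * (n * n)"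
    using assms n0 by (intro mult_left_mono mult_right_mono) auto
  finally have 1: "B * n \<le> (B / r) * n\<^sup>2" by (simp add: power2_eq_square)
  have "C = (C / r\<^sup>2) * r\<^sup>2" using assms by (simp add: field_simps)
  also have "\<dots> \<le> (C / r\<^sup>2) * n\<^sup>2"
    using assms by (intro mult_left_mono power_mono) auto
  finally have 2: "C \<le> (C / r\<^sup>2) * n\<^sup>2" .
  show ?thesis using 1 2 by (simp add: distrib_right)
qed

lemma identity_aux:
  fixes x z :: "'a::real_inner"
  shows "L (z - x) + 2 * a * (x \<bullet> (z - x)) - a * (norm z)\<^sup>2 + a * (norm x)\<^sup>2
       = L (z - x) - a * (norm (z - x))\<^sup>2"
proof -
  have "(norm z)\<^sup>2 = (norm x)\<^sup>2 + 2 * (x \<bullet> (z - x)) + (norm (z - x))\<^sup>2"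
    by (simp add: power2_norm_eq_inner inner_diff_left inner_diff_right inner_commute algebra_simps)
  moreover have "\<And>Z X I W L a::real. Z = X + 2*I + W \<Longrightarrow> L + 2*a*I - a*Z + a*X = L - a*W"
    by (simp add: algebra_simps)
  ultimately show ?thesis by blast
qed

lemma norm_sq_bound:
  fixes x z :: "'a::real_normed_vector"
  shows "(norm z)\<^sup>2 \<le> 2 * (norm (z - x))\<^sup>2 + 2 * (norm x)\<^sup>2"
proof -
  have "norm z \<le> norm (z - x) + norm x" by (metis diff_add_cancel norm_triangle_ineq)
  then have "(norm z)\<^sup>2 \<le> (norm (z - x) + norm x)\<^sup>2" by (intro power_mono) auto
  also have "\<dots> \<le> 2 * (norm (z - x))\<^sup>2 + 2 * (norm x)\<^sup>2"
    using sum_squares_ge_zero[of "norm (z-x) - norm x" 0] by (simp add: power2_eq_square algebra_simps)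
  finally show ?thesis .
qed

theorem mainTheorem7:
  fixes f :: "'a::{real_inner, complete_space} \<Rightarrow> real" and U :: "'a set"
  assumes "Phi_lsc_proper f" and "Phi_lsc_convex f"
    and "open U" and "C2_on U f"
  shows "\<forall>x\<in>U. subdiff_lsc f x \<noteq> {}"
proof
  fix x assume xU: "x \<in> U"
  obtain Df :: "'a \<Rightarrow> ('a \<Rightarrow>\<^sub>L real)" and D2f :: "'a \<Rightarrow> ('a \<Rightarrow>\<^sub>L ('a \<Rightarrow>\<^sub>L real))" where
    df: "\<forall>x\<in>U. (f has_derivative blinfun_apply (Df x)) (at x)" and
    d2: "\<forall>x\<in>U. (Df has_derivative blinfun_apply (D2f x)) (at x)"
    using assms(4) unfolding C2_on_def by blast
  obtain r K where rK: "r > 0" "K \<ge> 0" and loc: "\<forall>y. norm (y - x) < r \<longrightarrow>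
           f y - f x - blinfun_apply (Df x) (y - x) \<ge> - K * (norm (y - x))\<^sup>2"
    using local_bound[OF assms(3) xU df] d2 xU by blast
  obtain \<phi> where "\<phi> \<in> Phi_lsc_minorants f" using assms(1) unfolding Phi_lsc_proper_def by blast
  then obtain a0 v0 c0 where a0: "a0 \<ge> 0" and
    mino: "\<And>z. - a0 * (norm z)\<^sup>2 + blinfun_apply v0 z + c0 \<le> f z"
    unfolding Phi_lsc_minorants_def Phi_lsc_def by auto
  define B where "B = norm v0 + norm (Df x)"
  define C where "C = 2 * a0 * (norm x)\<^sup>2 + norm v0 * norm x + \<bar>f x\<bar> + \<bar>c0\<bar>"
  define a where "a = K + 2 * a0 + (B / r + C / r\<^sup>2)"
  have B0: "B \<ge> 0" and C0: "C \<ge> 0" using a0 by (auto simp: B_def C_def)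
  have a0': "a \<ge> 0" "a \<ge> K" "a \<ge> 2 * a0 + (B / r + C / r\<^sup>2)"
    using rK a0 B0 C0 by (auto simp: a_def)
  have key: "f z - f x - blinfun_apply (Df x) (z - x) \<ge> - a * (norm (z - x))\<^sup>2" for z
  proof (cases "norm (z - x) < r")
    case True
    then have "f z - f x - blinfun_apply (Df x) (z - x) \<ge> - K * (norm (z - x))\<^sup>2" using loc by blast
    moreover have "K * (norm (z - x))\<^sup>2 \<le> a * (norm (z - x))\<^sup>2"
      using a0' by (intro mult_right_mono) auto
    ultimately show ?thesis by linarith
  next
    case False
    define n where "n = norm (z - x)"
    have nr: "n \<ge> r" using False by (simp add: n_def)
    have h1: "(norm z)\<^sup>2 \<le> 2 * n\<^sup>2 + 2 * (norm x)\<^sup>2" using norm_sq_bound[of z x] by (simp add: n_def)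
    have "norm z \<le> n + norm x" unfolding n_def by (metis diff_add_cancel norm_triangle_ineq)
    then have "\<bar>blinfun_apply v0 z\<bar> \<le> norm v0 * (n + norm x)"
      using norm_blinfun[of v0 z] by (simp add: order_trans mult_left_mono)
    then have h2: "blinfun_apply v0 z \<ge> - (norm v0 * n + norm v0 * norm x)" by (simp add: algebra_simps)
    have "\<bar>blinfun_apply (Df x) (z - x)\<bar> \<le> norm (Df x) * n"
      using norm_blinfun[of "Df x" "z - x"] by (simp add: n_def)
    then have h3: "blinfun_apply (Df x) (z - x) \<le> norm (Df x) * n" by simp
    have h4: "a0 * (norm z)\<^sup>2 \<le> a0 * (2 * n\<^sup>2 + 2 * (norm x)\<^sup>2)" using h1 a0 by (intro mult_left_mono) auto
    have h5: "(B / r + C / r\<^sup>2) * n\<^sup>2 \<ge> B * n + C" using real_aux[OF rK(1) nr B0 C0] .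
    have h6: "a * n\<^sup>2 \<ge> (2 * a0 + (B / r + C / r\<^sup>2)) * n\<^sup>2" using a0' by (intro mult_right_mono) auto
    have h7: "\<bar>f x\<bar> \<ge> f x" "\<bar>c0\<bar> \<ge> - c0" by auto
    have "f z - f x - blinfun_apply (Df x) (z - x) + a * n\<^sup>2 \<ge> 0"
      using mino[of z] h2 h3 h4 h5 h6 h7 unfolding B_def C_def by (simp add: algebra_simps)
    then show ?thesis by (simp add: n_def)
  qed
  define v where "v = Df x + (2 * a) *\<^sub>R blinfun_inner_right x"
  have "(a, v) \<in> subdiff_lsc f x"
    unfolding subdiff_lsc_def
  proof (simp, intro conjI allI)
    show "0 \<le> a" using a0' by simp
  next
    fix z
    have "blinfun_apply v (z - x) - a * (norm z)\<^sup>2 + a * (norm x)\<^sup>2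
        = blinfun_apply (Df x) (z - x) + 2 * a * (x \<bullet> (z - x)) - a * (norm z)\<^sup>2 + a * (norm x)\<^sup>2"
      by (simp add: v_def blinfun.add_left blinfun.scaleR_left)
    also have "\<dots> = blinfun_apply (Df x) (z - x) - a * (norm (z - x))\<^sup>2"
      by (rule identity_aux)
    finally show "blinfun_apply v (z - x) - a * (norm z)\<^sup>2 + a * (norm x)\<^sup>2 \<le> f z - f x"
      using key[of z] by linarith
  qed
  then show "subdiff_lsc f x \<noteq> {}" by blast
qed

end
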